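(* Let $\Sigma$ be an alphabet with $|\Sigma|\ge 3$ and $f\colon\Sigma^*\to\Sigma^*$ RCP. If $f(a)\in a\Sigma^*$ for every letter $a\in\Sigma$, then $f(x)\in x\Sigma^*$ for every word $x\in\Sigma^*$.
   Context: $\Sigma^*$ is the free monoid over $\Sigma$ (finite words, concatenation, empty word $\varepsilon$). For a word $w$, $w\Sigma^*$ denotes the set of words having $w$ as a prefix. A function $f\colon(\Sigma^* )^k\to\Sigma^*$ is RCP if for every monoid morphism $\varphi\colon\Sigma^*\to\Sigma^*$ and all $u_1,\ldots,u_k,v_1,\ldots,v_k$ with $\varphi(u_i)=\varphi(v_i)$ for all $i$, we have $\varphi(f(u_1,\ldots,u_k))=\varphi(f(v_1,\ldots,v_k))$. *)

theory Defs
  imports Main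
begin

definition monoid_morphism :: "('a list \<Rightarrow> 'a list) \<Rightarrow> bool" where
  "monoid_morphism \<phi> \<longleftrightarrow> \<phi> [] = [] \<and> (\<forall>u v. \<phi> (u @ v) = \<phi> u @ \<phi> v)"

text \<open>RCP for unary word functions (k = 1).\<close>
definition RCP :: "('a list \<Rightarrow> 'a list) \<Rightarrow> bool" where
  "RCP f \<longleftrightarrow> (\<forall>\<phi> u v. monoid_morphism \<phi> \<longrightarrow> \<phi> u = \<phi> v \<longrightarrow> \<phi> (f u) = \<phi> (f v))"

end

theory Submission
  imports Defs
begin

definition hsub :: "'a \<Rightarrow> 'a list \<Rightarrow> 'a list \<Rightarrow> 'a list" where
  "hsub a y p = concat (map (\<lambda>d. if d = a then y else [d]) p)"

definition msub :: "'a \<Rightarrow> 'a \<Rightarrow> 'a list \<Rightarrow> 'a list" where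
  "msub b c p = map (\<lambda>d. if d = b then c else d) p"

lemma mm_hsub: "monoid_morphism (hsub a y)"
  by (simp add: monoid_morphism_def hsub_def)

lemma mm_msub: "monoid_morphism (msub b c)"
  by (simp add: monoid_morphism_def msub_def)

lemma hsub_id: "a \<notin> set x \<Longrightarrow> hsub a y x = x"
  by (induction x) (auto simp: hsub_def)

lemma msub_idem: "msub b c (msub b c x) = msub b c x"
  by (induction x) (auto simp: msub_def)

lemma msub_notin: "b \<noteq> c \<Longrightarrow> b \<notin> set (msub b c x)"
  by (auto simp: msub_def)

lemma hsub_Cons: "hsub a y (d # p) = (if d = a then y else [d]) @ hsub a y p"
  by (simp add: hsub_def)

lemma msub_Cons: "msub b c (d # p) = (if d = b then c else d) # msub b c p"
  by (simp add: msub_def)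

lemma lemA:
  assumes "RCP f" "\<forall>a. \<exists>w. f [a] = [a] @ w" "a \<notin> set y"
  shows "\<exists>w. hsub a y (f y) = y @ w"
proof -
  have e: "hsub a y [a] = hsub a y y" using hsub_id[OF assms(3)] by (simp add: hsub_def)
  have "hsub a y (f [a]) = hsub a y (f y)"
    using assms(1) mm_hsub[of a y] e unfolding RCP_def by metis
  moreover obtain w where "f [a] = [a] @ w" using assms(2) by blast
  ultimately have "hsub a y (f y) = y @ hsub a y w" by (simp add: hsub_def)
  then show ?thesis by blast
qed

lemma pB:
  assumes "a \<noteq> c" "a \<notin> set z" "c \<notin> set z"
    "\<exists>w. hsub a y p = z @ w" "\<exists>w. hsub c y' p = z @ w"
  shows "\<exists>w. p = z @ w"
  using assms
proof (induction p arbitrary: z)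
  case Nil
  then show ?case by (simp add: hsub_def)
next
  case (Cons d p)
  show ?case
  proof (cases z)
    case Nil then show ?thesis by simp
  next
    case (Cons e z')
    show ?thesis
    proof (cases "d = a")
      case True
      then show ?thesis using Cons.prems Cons by (auto simp: hsub_Cons)
    next
      case False
      show ?thesis
      proof (cases "d = c")
        case True
        then show ?thesis using Cons.prems Cons by (auto simp: hsub_Cons)
      next
        case False
        with \<open>d \<noteq> a\<close> Cons.prems Cons have "e = d" "\<exists>w. hsub a y p = z' @ w" "\<exists>w. hsub c y' p = z' @ w"
          by (auto simp: hsub_Cons)
        then show ?thesis using Cons.IH[of z'] Cons.prems Cons by auto
      qed
    qed
  qed
qed

lemma pC:
  assumes "a \<notin> set z" "b \<noteq> a" "c \<noteq> a"
    "\<exists>w. hsub a y p = z @ w" "\<exists>w. msub b c p = msub b c z @ w"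
  shows "\<exists>w. p = z @ w"
  using assms
proof (induction p arbitrary: z)
  case Nil
  then show ?case by (simp add: hsub_def)
next
  case (Cons d p)
  show ?case
  proof (cases z)
    case Nil then show ?thesis by simp
  next
    case (Cons e z')
    show ?thesis
    proof (cases "d = a")
      case True
      then show ?thesis using Cons.prems Cons by (auto simp: msub_Cons split: if_splits)
    next
      case False
      with Cons.prems Cons have "e = d" "\<exists>w. hsub a y p = z' @ w" "\<exists>w. msub b c p = msub b c z' @ w"
        by (auto simp: hsub_Cons msub_Cons)
      then show ?thesis using Cons.IH[of z'] Cons.prems Cons by auto
    qed
  qed
qed

lemma pD:
  assumes "\<forall>b. c1 b \<noteq> c2 b"
    "\<forall>b. \<exists>w. msub b (c1 b) p = msub b (c1 b) z @ w"
    "\<forall>b. \<exists>w. msub b (c2 b) p = msub b (c2 b) z @ w"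
  shows "\<exists>w. p = z @ w"
  using assms
proof (induction p arbitrary: z)
  case Nil
  then show ?case by (simp add: msub_def)
next
  case (Cons d p)
  show ?case
  proof (cases z)
    case Nil then show ?thesis by simp
  next
    case (Cons e z')
    have "d = e"
    proof (rule ccontr)
      assume ne: "d \<noteq> e"
      from Cons.prems(2) Cons ne have "d = c1 e" by (auto simp: msub_Cons dest: spec[of _ e])
      moreover from Cons.prems(3) Cons ne have "d = c2 e" by (auto simp: msub_Cons dest: spec[of _ e])
      ultimately show False using Cons.prems(1) by metis
    qed
    have "\<forall>b. \<exists>w. msub b (c1 b) p = msub b (c1 b) z' @ w"
      using Cons.prems(2) Cons by (auto simp: msub_Cons)
    moreover have "\<forall>b. \<exists>w. msub b (c2 b) p = msub b (c2 b) z' @ w"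
      using Cons.prems(3) Cons by (auto simp: msub_Cons)
    ultimately show ?thesis using Cons.IH[of z'] Cons.prems(1) Cons \<open>d = e\<close> by auto
  qed
qed

lemma merge:
  assumes "RCP f" "\<exists>w. f (msub b c x) = msub b c x @ w"
  shows "\<exists>w. msub b c (f x) = msub b c x @ w"
proof -
  have "msub b c (f x) = msub b c (f (msub b c x))"
    using assms(1) mm_msub[of b c] msub_idem[of b c x] unfolding RCP_def by metis
  moreover obtain w where "f (msub b c x) = msub b c x @ w" using assms(2) by blast
  ultimately have "msub b c (f x) = msub b c x @ msub b c w"
    by (simp add: msub_def msub_idem[unfolded msub_def])
  then show ?thesis by blast
qed

lemma three:
  assumes "card (UNIV :: 'a::finite set) \<ge> 3"
  shows "\<exists>c1 c2. c1 \<noteq> c2 \<and> c1 \<noteq> (b::'a) \<and> c2 \<noteq> b"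
proof (rule ccontr)
  assume h: "\<not> ?thesis"
  obtain c where c: "c \<noteq> b"
  proof -
    have "card (UNIV :: 'a set) \<noteq> card {b}" using assms by simp
    then have "UNIV \<noteq> {b}" by metis
    then show ?thesis using that by auto
  qed
  have "UNIV \<subseteq> {b, c}" using h c by auto
  then have "card (UNIV :: 'a set) \<le> card {b, c}" by (intro card_mono) auto
  also have "\<dots> \<le> 2" by (simp add: card_insert_le_m1)
  finally show False using assms by simp
qed

theorem mainTheorem9:
  fixes f :: "'a::finite list \<Rightarrow> 'a list"
  assumes "card (UNIV :: 'a set) \<ge> 3"
    and "RCP f"
    and "\<forall>a::'a. \<exists>w. f [a] = [a] @ w"
  shows "\<forall>x::'a list. \<exists>w. f x = x @ w"
proof -
  have B: "\<exists>w. f y = y @ w" if "a \<noteq> c" "a \<notin> set y" "c \<notin> set y" for a c y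
    using pB[OF that lemA[OF assms(2,3) that(2)] lemA[OF assms(2,3) that(3)]] .
  have C: "\<exists>w. f y = y @ w" if "a \<notin> set y" "b \<noteq> a" "c \<noteq> a" "b \<noteq> c" for a b c y
  proof -
    have "\<exists>w. f (msub b c y) = msub b c y @ w"
      by (rule B[of a b]) (use that msub_notin in \<open>auto simp: msub_def\<close>)
    from merge[OF assms(2) this] show ?thesis
      using pC[OF that(1-3) lemA[OF assms(2,3) that(1)]] by blast
  qed
  have "\<forall>b. \<exists>c1 c2. c1 \<noteq> c2 \<and> c1 \<noteq> (b::'a) \<and> c2 \<noteq> b" using three[OF assms(1)] by blast
  then have "\<exists>g. \<forall>b. fst (g b) \<noteq> snd (g b) \<and> fst (g b) \<noteq> b \<and> snd (g b) \<noteq> (b::'a)"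
    by (intro choice) auto
  then obtain g where g: "\<forall>b. fst (g b) \<noteq> snd (g b) \<and> fst (g b) \<noteq> b \<and> snd (g b) \<noteq> (b::'a)" by blast
  define c1 where "c1 = (\<lambda>b. fst (g b))"
  define c2 where "c2 = (\<lambda>b. snd (g b))"
  have cc: "\<forall>b. c1 b \<noteq> c2 b \<and> c1 b \<noteq> b \<and> c2 b \<noteq> b" using g by (simp add: c1_def c2_def)
  show ?thesis
  proof
    fix x
    have M: "\<exists>w. msub b c (f x) = msub b c x @ w" if "c \<noteq> b" "c' \<noteq> b" "c \<noteq> c'" for b c c'
    proof -
      have "\<exists>w. f (msub b c x) = msub b c x @ w"
        by (rule C[of b _ c c']) (use that msub_notin[of b c x] in auto)
      then show ?thesis using merge[OF assms(2)] by blast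
    qed
    show "\<exists>w. f x = x @ w"
    proof (rule pD[of c1 c2])
      show "\<forall>b. c1 b \<noteq> c2 b" using cc by blast
      show "\<forall>b. \<exists>w. msub b (c1 b) (f x) = msub b (c1 b) x @ w"
      proof
        fix b show "\<exists>w. msub b (c1 b) (f x) = msub b (c1 b) x @ w"
          using M[where b=b and c="c1 b" and c'="c2 b"] cc by blast
      qed
      show "\<forall>b. \<exists>w. msub b (c2 b) (f x) = msub b (c2 b) x @ w"
      proof
        fix b show "\<exists>w. msub b (c2 b) (f x) = msub b (c2 b) x @ w"
          using M[where b=b and c="c2 b" and c'="c1 b"] cc by metis
      qed
    qed
  qed
qed

end
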